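(* Let $\mathbb{E}$ be a regular category and $(f,s)\colon X\rightleftarrows Y$ a split epimorphism. Then $(f,s)$ is strongly split if and only if, for every monomorphism $m\colon Y'\rightarrowtail Y$ with pullback $n\colon X'\rightarrowtail X$ of $m$ along $f$, the pair of monomorphisms $(s,n)$ is jointly strongly epic, i.e. the subobject $1_X$ is the supremum of the subobjects $s$ and $n$.
   Context: A split epimorphism is a pair $(f,s)$ with $fs=1$. A pair of morphisms with common codomain $Z$ is jointly extremally (equivalently, in a regular category, strongly) epic if it factors jointly through no non-invertible monomorphism into $Z$. A split epimorphism $(f,s)\colon X\rightleftarrows Y$ is strongly split when, for every morphism $y\colon\bar Y\to Y$, with $x\colon\bar X=\bar Y\times_YX\to X$ the pullback projection, the pair $(x,s)$ is jointly extremally epic. *)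

theory Defs
  imports Main
begin

text \<open>Composition is written in applicative order:
Comp C g f is g after f, meaningful when Cod f = Dom g.\<close>

record ('o, 'a) cat =
  Obj  :: "'o set"
  Arr  :: "'a set"
  Dom  :: "'a \<Rightarrow> 'o"
  Cod  :: "'a \<Rightarrow> 'o"
  Id   :: "'o \<Rightarrow> 'a"
  Comp :: "'a \<Rightarrow> 'a \<Rightarrow> 'a"

definition hom :: "('o, 'a, 'm) cat_scheme \<Rightarrow> 'o \<Rightarrow> 'o \<Rightarrow> 'a set" where
  "hom C a b = {f \<in> Arr C. Dom C f = a \<and> Cod C f = b}"

definition category :: "('o, 'a, 'm) cat_scheme \<Rightarrow> bool" where
  "category C \<longleftrightarrow>
     (\<forall>f \<in> Arr C. Dom C f \<in> Obj C \<and> Cod C f \<in> Obj C) \<and>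
     (\<forall>a \<in> Obj C. Id C a \<in> hom C a a) \<and>
     (\<forall>f \<in> Arr C. \<forall>g \<in> Arr C. Cod C f = Dom C g \<longrightarrow>
        Comp C g f \<in> hom C (Dom C f) (Cod C g)) \<and>
     (\<forall>f \<in> Arr C. \<forall>g \<in> Arr C. \<forall>h \<in> Arr C. Cod C f = Dom C g \<and> Cod C g = Dom C h \<longrightarrow>
        Comp C h (Comp C g f) = Comp C (Comp C h g) f) \<and>
     (\<forall>f \<in> Arr C. Comp C f (Id C (Dom C f)) = f \<and> Comp C (Id C (Cod C f)) f = f)"

definition mono :: "('o, 'a, 'm) cat_scheme \<Rightarrow> 'a \<Rightarrow> bool" where
  "mono C m \<longleftrightarrow> m \<in> Arr C \<and>
     (\<forall>g \<in> Arr C. \<forall>h \<in> Arr C. Cod C g = Dom C m \<and> Cod C h = Dom C m \<and> Dom C g = Dom C h \<and>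
        Comp C m g = Comp C m h \<longrightarrow> g = h)"

definition iso :: "('o, 'a, 'm) cat_scheme \<Rightarrow> 'a \<Rightarrow> bool" where
  "iso C m \<longleftrightarrow> m \<in> Arr C \<and>
     (\<exists>g \<in> hom C (Cod C m) (Dom C m).
        Comp C g m = Id C (Dom C m) \<and> Comp C m g = Id C (Cod C m))"

definition is_pullback :: "('o, 'a, 'm) cat_scheme \<Rightarrow> 'a \<Rightarrow> 'a \<Rightarrow> 'a \<Rightarrow> 'a \<Rightarrow> bool" where
  "is_pullback C f g p q \<longleftrightarrow>
     f \<in> Arr C \<and> g \<in> Arr C \<and> p \<in> Arr C \<and> q \<in> Arr C \<and>
     Cod C f = Cod C g \<and> Cod C p = Dom C f \<and> Cod C q = Dom C g \<and> Dom C p = Dom C q \<and>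
     Comp C f p = Comp C g q \<and>
     (\<forall>p' \<in> Arr C. \<forall>q' \<in> Arr C.
        Cod C p' = Dom C f \<and> Cod C q' = Dom C g \<and> Dom C p' = Dom C q' \<and>
        Comp C f p' = Comp C g q' \<longrightarrow>
        (\<exists>!u. u \<in> hom C (Dom C p') (Dom C p) \<and> Comp C p u = p' \<and> Comp C q u = q'))"

definition is_terminal :: "('o, 'a, 'm) cat_scheme \<Rightarrow> 'o \<Rightarrow> bool" where
  "is_terminal C t \<longleftrightarrow> t \<in> Obj C \<and> (\<forall>a \<in> Obj C. \<exists>!f. f \<in> hom C a t)"

definition has_pullbacks :: "('o, 'a, 'm) cat_scheme \<Rightarrow> bool" where
  "has_pullbacks C \<longleftrightarrow>
     (\<forall>f \<in> Arr C. \<forall>g \<in> Arr C. Cod C f = Cod C g \<longrightarrow> (\<exists>p q. is_pullback C f g p q))"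

definition finitely_complete :: "('o, 'a, 'm) cat_scheme \<Rightarrow> bool" where
  "finitely_complete C \<longleftrightarrow> (\<exists>t. is_terminal C t) \<and> has_pullbacks C"

definition is_coequalizer :: "('o, 'a, 'm) cat_scheme \<Rightarrow> 'a \<Rightarrow> 'a \<Rightarrow> 'a \<Rightarrow> bool" where
  "is_coequalizer C u v q \<longleftrightarrow>
     u \<in> Arr C \<and> v \<in> Arr C \<and> q \<in> Arr C \<and>
     Dom C u = Dom C v \<and> Cod C u = Cod C v \<and> Dom C q = Cod C u \<and>
     Comp C q u = Comp C q v \<and>
     (\<forall>w \<in> Arr C. Dom C w = Cod C u \<and> Comp C w u = Comp C w v \<longrightarrow>
        (\<exists>!h. h \<in> hom C (Cod C q) (Cod C w) \<and> Comp C h q = w))"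

definition regular_epi :: "('o, 'a, 'm) cat_scheme \<Rightarrow> 'a \<Rightarrow> bool" where
  "regular_epi C q \<longleftrightarrow> (\<exists>u v. is_coequalizer C u v q)"

definition regular_category :: "('o, 'a, 'm) cat_scheme \<Rightarrow> bool" where
  "regular_category C \<longleftrightarrow>
     category C \<and> finitely_complete C \<and>
     (\<forall>f p1 p2. is_pullback C f f p1 p2 \<longrightarrow> (\<exists>q. is_coequalizer C p1 p2 q)) \<and>
     (\<forall>q g p q'. regular_epi C q \<and> is_pullback C q g p q' \<longrightarrow> regular_epi C q')"

definition jointly_extremally_epic :: "('o, 'a, 'm) cat_scheme \<Rightarrow> 'a \<Rightarrow> 'a \<Rightarrow> bool" where
  "jointly_extremally_epic C a b \<longleftrightarrow>
     a \<in> Arr C \<and> b \<in> Arr C \<and> Cod C a = Cod C b \<and>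
     (\<forall>m. mono C m \<and> Cod C m = Cod C a \<and>
        (\<exists>a' \<in> Arr C. Cod C a' = Dom C m \<and> Comp C m a' = a) \<and>
        (\<exists>b' \<in> Arr C. Cod C b' = Dom C m \<and> Comp C m b' = b) \<longrightarrow> iso C m)"

definition jointly_strongly_epic :: "('o, 'a, 'm) cat_scheme \<Rightarrow> 'a \<Rightarrow> 'a \<Rightarrow> bool" where
  "jointly_strongly_epic C a b \<longleftrightarrow>
     a \<in> Arr C \<and> b \<in> Arr C \<and> Cod C a = Cod C b \<and>
     (\<forall>m v a' b'. mono C m \<and> v \<in> hom C (Cod C a) (Cod C m) \<and>
        a' \<in> hom C (Dom C a) (Dom C m) \<and> b' \<in> hom C (Dom C b) (Dom C m) \<and>
        Comp C m a' = Comp C v a \<and> Comp C m b' = Comp C v b \<longrightarrow>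
        (\<exists>!d. d \<in> hom C (Cod C a) (Dom C m) \<and> Comp C m d = v \<and>
               Comp C d a = a' \<and> Comp C d b = b'))"

definition split_epi :: "('o, 'a, 'm) cat_scheme \<Rightarrow> 'a \<Rightarrow> 'a \<Rightarrow> bool" where
  "split_epi C f s \<longleftrightarrow> f \<in> Arr C \<and> s \<in> hom C (Cod C f) (Dom C f) \<and>
     Comp C f s = Id C (Cod C f)"

definition strongly_split :: "('o, 'a, 'm) cat_scheme \<Rightarrow> 'a \<Rightarrow> 'a \<Rightarrow> bool" where
  "strongly_split C f s \<longleftrightarrow>
     (\<forall>y x y'. y \<in> Arr C \<and> Cod C y = Cod C f \<and> is_pullback C f y x y' \<longrightarrow>
        jointly_extremally_epic C x s)"

end

theory Submission
  imports Defs
begin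

lemma catD:
  assumes "category C"
  shows "\<forall>f \<in> Arr C. Dom C f \<in> Obj C \<and> Cod C f \<in> Obj C"
    "\<forall>a \<in> Obj C. Id C a \<in> hom C a a"
    "\<forall>f \<in> Arr C. \<forall>g \<in> Arr C. Cod C f = Dom C g \<longrightarrow>
        Comp C g f \<in> hom C (Dom C f) (Cod C g)"
    "\<forall>f \<in> Arr C. \<forall>g \<in> Arr C. \<forall>h \<in> Arr C. Cod C f = Dom C g \<and> Cod C g = Dom C h \<longrightarrow>
        Comp C h (Comp C g f) = Comp C (Comp C h g) f"
    "\<forall>f \<in> Arr C. Comp C f (Id C (Dom C f)) = f \<and> Comp C (Id C (Cod C f)) f = f"
  using assms unfolding category_def by simp_all

lemma cat_dom_obj: "category C \<Longrightarrow> f \<in> Arr C \<Longrightarrow> Dom C f \<in> Obj C"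
  using catD(1)[of C] by simp
lemma cat_cod_obj: "category C \<Longrightarrow> f \<in> Arr C \<Longrightarrow> Cod C f \<in> Obj C"
  using catD(1)[of C] by simp
lemma cat_id_hom: "category C \<Longrightarrow> a \<in> Obj C \<Longrightarrow> Id C a \<in> hom C a a"
  using catD(2)[of C] by simp
lemma cat_id_arr[simp]: "category C \<Longrightarrow> a \<in> Obj C \<Longrightarrow> Id C a \<in> Arr C"
  using cat_id_hom[of C a] unfolding hom_def by simp
lemma cat_id_dom[simp]: "category C \<Longrightarrow> a \<in> Obj C \<Longrightarrow> Dom C (Id C a) = a"
  using cat_id_hom[of C a] unfolding hom_def by simp
lemma cat_id_cod[simp]: "category C \<Longrightarrow> a \<in> Obj C \<Longrightarrow> Cod C (Id C a) = a"
  using cat_id_hom[of C a] unfolding hom_def by simp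
lemma cat_comp_hom: "category C \<Longrightarrow> f \<in> Arr C \<Longrightarrow> g \<in> Arr C \<Longrightarrow> Cod C f = Dom C g \<Longrightarrow> Comp C g f \<in> hom C (Dom C f) (Cod C g)"
  using catD(3)[of C] by simp
lemma cat_comp_arr[simp]: "category C \<Longrightarrow> f \<in> Arr C \<Longrightarrow> g \<in> Arr C \<Longrightarrow> Cod C f = Dom C g \<Longrightarrow> Comp C g f \<in> Arr C"
  using cat_comp_hom[of C f g] unfolding hom_def by simp
lemma cat_comp_dom[simp]: "category C \<Longrightarrow> f \<in> Arr C \<Longrightarrow> g \<in> Arr C \<Longrightarrow> Cod C f = Dom C g \<Longrightarrow> Dom C (Comp C g f) = Dom C f"
  using cat_comp_hom[of C f g] unfolding hom_def by simp
lemma cat_comp_cod[simp]: "category C \<Longrightarrow> f \<in> Arr C \<Longrightarrow> g \<in> Arr C \<Longrightarrow> Cod C f = Dom C g \<Longrightarrow> Cod C (Comp C g f) = Cod C g"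
  using cat_comp_hom[of C f g] unfolding hom_def by simp
lemma cat_assoc: "category C \<Longrightarrow> f \<in> Arr C \<Longrightarrow> g \<in> Arr C \<Longrightarrow> h \<in> Arr C \<Longrightarrow> Cod C f = Dom C g \<Longrightarrow> Cod C g = Dom C h \<Longrightarrow>
   Comp C h (Comp C g f) = Comp C (Comp C h g) f"
  using catD(4)[of C] by simp
lemma cat_idl[simp]: "category C \<Longrightarrow> f \<in> Arr C \<Longrightarrow> Comp C (Id C (Cod C f)) f = f"
  using catD(5)[of C] by simp
lemma cat_idr[simp]: "category C \<Longrightarrow> f \<in> Arr C \<Longrightarrow> Comp C f (Id C (Dom C f)) = f"
  using catD(5)[of C] by simp

lemma pb_basic:
  assumes "is_pullback C f g p q"
  shows "f \<in> Arr C" "g \<in> Arr C" "p \<in> Arr C" "q \<in> Arr C" "Cod C f = Cod C g"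
    "Cod C p = Dom C f" "Cod C q = Dom C g" "Dom C p = Dom C q" "Comp C f p = Comp C g q"
  using assms unfolding is_pullback_def by simp_all

lemma pb_univ:
  assumes "is_pullback C f g p q" "p' \<in> Arr C" "q' \<in> Arr C" "Cod C p' = Dom C f" "Cod C q' = Dom C g"
    "Dom C p' = Dom C q'" "Comp C f p' = Comp C g q'"
  shows "\<exists>!u. u \<in> hom C (Dom C p') (Dom C p) \<and> Comp C p u = p' \<and> Comp C q u = q'"
proof -
  have H: "\<forall>p' \<in> Arr C. \<forall>q' \<in> Arr C.
        Cod C p' = Dom C f \<and> Cod C q' = Dom C g \<and> Dom C p' = Dom C q' \<and>
        Comp C f p' = Comp C g q' \<longrightarrow>
        (\<exists>!u. u \<in> hom C (Dom C p') (Dom C p) \<and> Comp C p u = p' \<and> Comp C q u = q')"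
    using assms(1) unfolding is_pullback_def by (elim conjE) assumption
  show ?thesis by (rule H[rule_format, OF assms(2,3)]) (intro conjI assms)
qed

lemma pb_exists:
  assumes "is_pullback C f g p q" "p' \<in> Arr C" "q' \<in> Arr C" "Cod C p' = Dom C f" "Cod C q' = Dom C g"
    "Dom C p' = Dom C q'" "Comp C f p' = Comp C g q'"
  obtains u where "u \<in> Arr C" "Dom C u = Dom C p'" "Cod C u = Dom C p" "Comp C p u = p'" "Comp C q u = q'"
  using pb_univ[OF assms] unfolding hom_def by blast

lemma ex1_eq: "\<exists>!x. P x \<Longrightarrow> P a \<Longrightarrow> P b \<Longrightarrow> a = b" by blast

lemma pb_unique:
  assumes C: "category C" and pb: "is_pullback C f g p q" and u: "u1 \<in> Arr C" "u2 \<in> Arr C"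
    "Cod C u1 = Dom C p" "Cod C u2 = Dom C p" "Dom C u1 = Dom C u2"
    "Comp C p u1 = Comp C p u2" "Comp C q u1 = Comp C q u2"
  shows "u1 = u2"
proof -
  note b = pb_basic[OF pb]
  have cq: "Cod C u1 = Dom C q" using u(3) b(8) by simp
  have e: "Comp C f (Comp C p u1) = Comp C g (Comp C q u1)"
    using cat_assoc[OF C u(1) b(3) b(1) u(3) b(6)] cat_assoc[OF C u(1) b(4) b(2) cq b(7)] b(9)
    by simp
  have d: "Dom C (Comp C p u1) = Dom C u1" by (rule cat_comp_dom[OF C u(1) b(3) u(3)])
  have dq: "Dom C (Comp C q u1) = Dom C u1" by (rule cat_comp_dom[OF C u(1) b(4) cq])
  have ex: "\<exists>!u. u \<in> hom C (Dom C (Comp C p u1)) (Dom C p) \<and> Comp C p u = Comp C p u1 \<and> Comp C q u = Comp C q u1"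
    apply (rule pb_univ[OF pb])
         apply (rule cat_comp_arr[OF C u(1) b(3) u(3)])
        apply (rule cat_comp_arr[OF C u(1) b(4) cq])
       apply (simp add: cat_comp_cod[OF C u(1) b(3) u(3)] b(6))
      apply (simp add: cat_comp_cod[OF C u(1) b(4) cq] b(7))
     apply (simp add: d dq)
    by (rule e)
  have h: "u1 \<in> hom C (Dom C (Comp C p u1)) (Dom C p)" "u2 \<in> hom C (Dom C (Comp C p u1)) (Dom C p)"
    unfolding hom_def d using u(1,2,4,5) u(3) by auto
  show ?thesis
    apply (rule ex1_eq[OF ex])
    using h u(6,7) by simp_all
qed

lemma monoD:
  assumes "mono C m" "g \<in> Arr C" "h \<in> Arr C" "Cod C g = Dom C m" "Cod C h = Dom C m"
    "Dom C g = Dom C h" "Comp C m g = Comp C m h"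
  shows "g = h"
proof -
  have H: "\<forall>g \<in> Arr C. \<forall>h \<in> Arr C. Cod C g = Dom C m \<and> Cod C h = Dom C m \<and> Dom C g = Dom C h \<and>
        Comp C m g = Comp C m h \<longrightarrow> g = h"
    using assms(1) unfolding mono_def by (elim conjE) assumption
  show ?thesis by (rule H[rule_format, OF assms(2,3)]) (intro conjI assms)
qed

lemma mono_arr: "mono C m \<Longrightarrow> m \<in> Arr C"
  unfolding mono_def by simp

lemma mono_pb:
  assumes C: "category C" and pb: "is_pullback C v k p1 p2" and mk: "mono C k"
  shows "mono C p1"
  unfolding mono_def
proof (intro conjI ballI impI)
  note b = pb_basic[OF pb]
  show "p1 \<in> Arr C" by (rule b(3))
  fix g h assume g: "g \<in> Arr C" and h: "h \<in> Arr C" and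
    H: "Cod C g = Dom C p1 \<and> Cod C h = Dom C p1 \<and> Dom C g = Dom C h \<and> Comp C p1 g = Comp C p1 h"
  have cg: "Cod C g = Dom C p2" and ch: "Cod C h = Dom C p2" and cg1: "Cod C g = Dom C p1" and ch1: "Cod C h = Dom C p1"
    and dgh: "Dom C g = Dom C h" and e: "Comp C p1 g = Comp C p1 h"
    using H b(8) by simp_all
  have "Comp C k (Comp C p2 g) = Comp C (Comp C k p2) g" by (rule cat_assoc[OF C g b(4) b(2) cg b(7)])
  also have "\<dots> = Comp C (Comp C v p1) g" using b(9) by simp
  also have "\<dots> = Comp C v (Comp C p1 g)" by (rule cat_assoc[OF C g b(3) b(1) cg1 b(6), symmetric])
  also have "\<dots> = Comp C v (Comp C p1 h)" using e by simp
  also have "\<dots> = Comp C (Comp C v p1) h" by (rule cat_assoc[OF C h b(3) b(1) ch1 b(6)])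
  also have "\<dots> = Comp C (Comp C k p2) h" using b(9) by simp
  also have "\<dots> = Comp C k (Comp C p2 h)" by (rule cat_assoc[OF C h b(4) b(2) ch b(7), symmetric])
  finally have kk: "Comp C k (Comp C p2 g) = Comp C k (Comp C p2 h)" .
  have "Comp C p2 g = Comp C p2 h"
    by (rule monoD[OF mk]) (use C g h cg ch dgh b kk in simp_all)
  then show "g = h"
    by (rule pb_unique[OF C pb g h cg1 ch1 dgh e])
qed

lemma coeqD:
  assumes "is_coequalizer C u v q"
  shows "u \<in> Arr C" "v \<in> Arr C" "q \<in> Arr C" "Dom C u = Dom C v" "Cod C u = Cod C v"
    "Dom C q = Cod C u" "Comp C q u = Comp C q v"
  using assms unfolding is_coequalizer_def by simp_all

lemma coeq_univ:
  assumes "is_coequalizer C u v q" "w \<in> Arr C" "Dom C w = Cod C u" "Comp C w u = Comp C w v"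
  shows "\<exists>!h. h \<in> hom C (Cod C q) (Cod C w) \<and> Comp C h q = w"
proof -
  have H: "\<forall>w \<in> Arr C. Dom C w = Cod C u \<and> Comp C w u = Comp C w v \<longrightarrow>
        (\<exists>!h. h \<in> hom C (Cod C q) (Cod C w) \<and> Comp C h q = w)"
    using assms(1) unfolding is_coequalizer_def by (elim conjE) assumption
  show ?thesis by (rule H[rule_format, OF assms(2)]) (intro conjI assms)
qed

lemma coeq_epi:
  assumes C: "category C" and cq: "is_coequalizer C u v q" and g: "g \<in> Arr C" and h: "h \<in> Arr C"
    and dg: "Dom C g = Cod C q" and dh: "Dom C h = Cod C q" and cc: "Cod C g = Cod C h"
    and e: "Comp C g q = Comp C h q"
  shows "g = h"
proof -
  note b = coeqD[OF cq]
  have qg: "Cod C q = Dom C g" using dg by simp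
  have w: "Comp C g q \<in> Arr C" by (rule cat_comp_arr[OF C b(3) g qg])
  have dw: "Dom C (Comp C g q) = Cod C u" using cat_comp_dom[OF C b(3) g qg] b(6) by simp
  have cw: "Cod C (Comp C g q) = Cod C g" by (rule cat_comp_cod[OF C b(3) g qg])
  have uq: "Cod C u = Dom C q" using b(6) by simp
  have vq: "Cod C v = Dom C q" using b(6) b(5) by simp
  have "Comp C (Comp C g q) u = Comp C g (Comp C q u)" by (rule cat_assoc[OF C b(1) b(3) g uq qg, symmetric])
  also have "\<dots> = Comp C g (Comp C q v)" using b(7) by simp
  also have "\<dots> = Comp C (Comp C g q) v" by (rule cat_assoc[OF C b(2) b(3) g vq qg])
  finally have co: "Comp C (Comp C g q) u = Comp C (Comp C g q) v" .
  have ex: "\<exists>!k. k \<in> hom C (Cod C q) (Cod C (Comp C g q)) \<and> Comp C k q = Comp C g q"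
    by (rule coeq_univ[OF cq w dw co])
  show ?thesis
    apply (rule ex1_eq[OF ex])
    using g h dg dh cc cw e unfolding hom_def by simp_all
qed

lemma regular_epi_epi:
  assumes C: "category C" and r: "regular_epi C q" and g: "g \<in> Arr C" and h: "h \<in> Arr C"
    and dg: "Dom C g = Cod C q" and dh: "Dom C h = Cod C q" and cc: "Cod C g = Cod C h"
    and e: "Comp C g q = Comp C h q"
  shows "g = h"
proof -
  obtain u v where cq: "is_coequalizer C u v q" using r unfolding regular_epi_def by blast
  show ?thesis by (rule coeq_epi[OF C cq g h dg dh cc e])
qed

lemma strong_epi:
  assumes C: "category C" and cq: "is_coequalizer C u v e" and mk: "mono C m"
    and n: "n \<in> Arr C" and dn: "Dom C n = Cod C e" and x0: "x0 \<in> Arr C"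
    and cx: "Cod C x0 = Dom C m" and dx: "Dom C x0 = Dom C e" and eq: "Comp C m x0 = Comp C n e"
  obtains d where "d \<in> Arr C" "Dom C d = Cod C e" "Cod C d = Dom C m" "Comp C m d = n"
proof -
  note b = coeqD[OF cq]
  have m: "m \<in> Arr C" by (rule mono_arr[OF mk])
  have en: "Cod C e = Dom C n" using dn by simp
  have ue: "Cod C u = Dom C e" using b(6) by simp
  have ve: "Cod C v = Dom C e" using b(6) b(5) by simp
  have ux: "Cod C u = Dom C x0" using b(6) dx by simp
  have vx: "Cod C v = Dom C x0" using b(6) b(5) dx by simp
  have "Comp C m (Comp C x0 u) = Comp C (Comp C m x0) u" by (rule cat_assoc[OF C b(1) x0 m ux cx])
  also have "\<dots> = Comp C (Comp C n e) u" using eq by simp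
  also have "\<dots> = Comp C n (Comp C e u)" by (rule cat_assoc[OF C b(1) b(3) n ue en, symmetric])
  also have "\<dots> = Comp C n (Comp C e v)" using b(7) by simp
  also have "\<dots> = Comp C (Comp C n e) v" by (rule cat_assoc[OF C b(2) b(3) n ve en])
  also have "\<dots> = Comp C (Comp C m x0) v" using eq by simp
  also have "\<dots> = Comp C m (Comp C x0 v)" by (rule cat_assoc[OF C b(2) x0 m vx cx, symmetric])
  finally have mm: "Comp C m (Comp C x0 u) = Comp C m (Comp C x0 v)" .
  have xx: "Comp C x0 u = Comp C x0 v"
    by (rule monoD[OF mk]) (use C b x0 ux vx cx mm in simp_all)
  have ex: "\<exists>!h. h \<in> hom C (Cod C e) (Cod C x0) \<and> Comp C h e = x0"
    by (rule coeq_univ[OF cq x0]) (use dx b(6) xx in simp_all)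
  obtain d where d: "d \<in> hom C (Cod C e) (Cod C x0) \<and> Comp C d e = x0"
    using ex1_implies_ex[OF ex] by blast
  have da: "d \<in> Arr C" and dd: "Dom C d = Cod C e" and cd: "Cod C d = Dom C m" and de: "Comp C d e = x0"
    using d cx unfolding hom_def by simp_all
  have ed: "Cod C e = Dom C d" using dd by simp
  have dm: "Cod C d = Dom C m" by (rule cd)
  have "Comp C (Comp C m d) e = Comp C m (Comp C d e)" by (rule cat_assoc[OF C b(3) da m ed dm, symmetric])
  also have "\<dots> = Comp C n e" using de eq by simp
  finally have mde: "Comp C (Comp C m d) e = Comp C n e" .
  have cn: "Cod C n = Cod C m"
  proof -
    have "Cod C n = Cod C (Comp C n e)" using cat_comp_cod[OF C b(3) n en] by simp
    also have "\<dots> = Cod C (Comp C m x0)" using eq by simp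
    also have "\<dots> = Cod C m" using cat_comp_cod[OF C x0 m cx] by simp
    finally show ?thesis .
  qed
  have "Comp C m d = n"
    by (rule coeq_epi[OF C cq]) (use C da m n dm dd dn cn mde in simp_all)
  then show ?thesis using that da dd cd by blast
qed

lemma regD:
  assumes "regular_category C"
  shows "category C" "has_pullbacks C"
    "\<And>f p1 p2. is_pullback C f f p1 p2 \<Longrightarrow> \<exists>q. is_coequalizer C p1 p2 q"
    "\<And>q g p q'. regular_epi C q \<Longrightarrow> is_pullback C q g p q' \<Longrightarrow> regular_epi C q'"
  using assms unfolding regular_category_def finitely_complete_def by blast+

lemma pb_ex:
  assumes "has_pullbacks C" "f \<in> Arr C" "g \<in> Arr C" "Cod C f = Cod C g"
  obtains p q where "is_pullback C f g p q"
  using assms unfolding has_pullbacks_def by blast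

lemma image_fact:
  assumes R: "regular_category C" and y: "y \<in> Arr C"
  obtains e m0 where "regular_epi C e" "mono C m0" "e \<in> Arr C" "m0 \<in> Arr C" "Dom C e = Dom C y"
    "Cod C e = Dom C m0" "Cod C m0 = Cod C y" "Comp C m0 e = y"
proof -
  note r = regD[OF R]
  have C: "category C" by (rule r(1))
  obtain p1 p2 where kp: "is_pullback C y y p1 p2" by (rule pb_ex[OF r(2) y y refl])
  obtain q where cq: "is_coequalizer C p1 p2 q" using r(3)[OF kp] by blast
  have rq: "regular_epi C q" unfolding regular_epi_def using cq by blast
  note bq = coeqD[OF cq]
  note bk = pb_basic[OF kp]
  have ex: "\<exists>!h. h \<in> hom C (Cod C q) (Cod C y) \<and> Comp C h q = y"
    by (rule coeq_univ[OF cq y]) (use bk in simp_all)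
  obtain h where hh: "h \<in> hom C (Cod C q) (Cod C y) \<and> Comp C h q = y"
    using ex1_implies_ex[OF ex] by blast
  have h: "h \<in> Arr C" and dh: "Dom C h = Cod C q" and ch: "Cod C h = Cod C y" and hq: "Comp C h q = y"
    using hh unfolding hom_def by simp_all
  have dq: "Dom C q = Dom C y" using bq(6) bk(6) by simp
  have qh: "Cod C q = Dom C h" using dh by simp
  have mh: "mono C h"
    unfolding mono_def
  proof (intro conjI ballI impI)
    show "h \<in> Arr C" by (rule h)
    fix g g' assume g: "g \<in> Arr C" and g': "g' \<in> Arr C" and
      H: "Cod C g = Dom C h \<and> Cod C g' = Dom C h \<and> Dom C g = Dom C g' \<and> Comp C h g = Comp C h g'"
    obtain a b where kab: "is_pullback C h h a b" by (rule pb_ex[OF r(2) h h refl])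
    note ba = pb_basic[OF kab]
    obtain w0 where w0: "w0 \<in> Arr C" "Dom C w0 = Dom C g" "Cod C w0 = Dom C a" "Comp C a w0 = g" "Comp C b w0 = g'"
      by (rule pb_exists[OF kab g g']) (use H in simp_all)
    have ab: "a = b"
    proof -
      have qa: "Cod C q = Cod C a" using ba(6) dh by simp
      obtain r1 e1 where pb1: "is_pullback C q a r1 e1" by (rule pb_ex[OF r(2) bq(3) ba(3) qa])
      have re1: "regular_epi C e1" by (rule r(4)[OF rq pb1])
      note b1 = pb_basic[OF pb1]
      have e1b: "Cod C e1 = Dom C b" using b1(7) ba(8) by simp
      have be1: "Comp C b e1 \<in> Arr C" by (rule cat_comp_arr[OF C b1(4) ba(4) e1b])
      have qbe1: "Cod C q = Cod C (Comp C b e1)" using cat_comp_cod[OF C b1(4) ba(4) e1b] ba(7) dh by simp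
      obtain r2 e2 where pb2: "is_pullback C q (Comp C b e1) r2 e2" by (rule pb_ex[OF r(2) bq(3) be1 qbe1])
      have re2: "regular_epi C e2" by (rule r(4)[OF rq pb2])
      note b2 = pb_basic[OF pb2]
      have de1: "Dom C (Comp C b e1) = Dom C e1" by (rule cat_comp_dom[OF C b1(4) ba(4) e1b])
      have e2e1: "Cod C e2 = Dom C e1" using b2(7) de1 by simp
      have e2r1: "Cod C e2 = Dom C r1" using e2e1 b1(8) by simp
      have r1q: "Cod C r1 = Dom C q" by (rule b1(6))
      have r2q: "Cod C r2 = Dom C q" by (rule b2(6))
      have e1a: "Cod C e1 = Dom C a" by (rule b1(7))
      have ah: "Cod C a = Dom C h" by (rule ba(6))
      have bh: "Cod C b = Dom C h" by (rule ba(7))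
      have re: "Comp C r1 e2 \<in> Arr C" by (rule cat_comp_arr[OF C b2(4) b1(3) e2r1])
      have ae: "Comp C a e1 \<in> Arr C" by (rule cat_comp_arr[OF C b1(4) ba(3) e1a])
      have cae: "Cod C (Comp C a e1) = Dom C h" using cat_comp_cod[OF C b1(4) ba(3) e1a] ah by simp
      have cbe: "Cod C (Comp C b e1) = Dom C h" using cat_comp_cod[OF C b1(4) ba(4) e1b] bh by simp
      have e2be: "Cod C e2 = Dom C (Comp C b e1)" using e2e1 de1 by simp
      have cre: "Cod C (Comp C r1 e2) = Dom C q" using cat_comp_cod[OF C b2(4) b1(3) e2r1] r1q by simp
      have "Comp C y (Comp C r1 e2) = Comp C (Comp C h q) (Comp C r1 e2)" using hq by simp
      also have "\<dots> = Comp C h (Comp C q (Comp C r1 e2))" by (rule cat_assoc[OF C re bq(3) h cre qh, symmetric])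
      also have "Comp C q (Comp C r1 e2) = Comp C (Comp C q r1) e2" by (rule cat_assoc[OF C b2(4) b1(3) bq(3) e2r1 r1q])
      also have "Comp C q r1 = Comp C a e1" by (rule b1(9))
      also have "Comp C h (Comp C (Comp C a e1) e2) = Comp C (Comp C h (Comp C a e1)) e2"
        by (rule cat_assoc[OF C b2(4) ae h _ cae]) (use e2e1 cat_comp_dom[OF C b1(4) ba(3) e1a] in simp)
      also have "Comp C h (Comp C a e1) = Comp C (Comp C h a) e1" by (rule cat_assoc[OF C b1(4) ba(3) h e1a ah])
      also have "Comp C h a = Comp C h b" by (rule ba(9))
      also have "Comp C (Comp C h b) e1 = Comp C h (Comp C b e1)" by (rule cat_assoc[OF C b1(4) ba(4) h e1b bh, symmetric])
      also have "Comp C (Comp C h (Comp C b e1)) e2 = Comp C h (Comp C (Comp C b e1) e2)"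
        by (rule cat_assoc[OF C b2(4) be1 h e2be cbe, symmetric])
      also have "Comp C (Comp C b e1) e2 = Comp C q r2" by (rule b2(9)[symmetric])
      also have "Comp C h (Comp C q r2) = Comp C (Comp C h q) r2" by (rule cat_assoc[OF C b2(3) bq(3) h r2q qh])
      also have "Comp C h q = y" by (rule hq)
      finally have yy: "Comp C y (Comp C r1 e2) = Comp C y r2" .
      have dre: "Dom C (Comp C r1 e2) = Dom C e2" by (rule cat_comp_dom[OF C b2(4) b1(3) e2r1])
      obtain w where w: "w \<in> Arr C" "Dom C w = Dom C (Comp C r1 e2)" "Cod C w = Dom C p1"
          "Comp C p1 w = Comp C r1 e2" "Comp C p2 w = r2"
        by (rule pb_exists[OF kp re b2(3)]) (use cre r2q dq dre b2(8) yy in simp_all)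
      have wp2: "Cod C w = Dom C p2" using w(3) bk(8) by simp
      have p1q: "Cod C p1 = Dom C q" using bq(6) by simp
      have p2q: "Cod C p2 = Dom C q" using bq(6) bq(5) by simp
      have "Comp C q (Comp C r1 e2) = Comp C q (Comp C p1 w)" using w(4) by simp
      also have "\<dots> = Comp C (Comp C q p1) w" by (rule cat_assoc[OF C w(1) bk(3) bq(3) w(3) p1q])
      also have "Comp C q p1 = Comp C q p2" by (rule bq(7))
      also have "Comp C (Comp C q p2) w = Comp C q (Comp C p2 w)" by (rule cat_assoc[OF C w(1) bk(4) bq(3) wp2 p2q, symmetric])
      also have "Comp C p2 w = r2" by (rule w(5))
      finally have qq: "Comp C q (Comp C r1 e2) = Comp C q r2" .
      have "Comp C (Comp C a e1) e2 = Comp C (Comp C q r1) e2" using b1(9) by simp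
      also have "\<dots> = Comp C q (Comp C r1 e2)" by (rule cat_assoc[OF C b2(4) b1(3) bq(3) e2r1 r1q, symmetric])
      also have "\<dots> = Comp C q r2" by (rule qq)
      also have "\<dots> = Comp C (Comp C b e1) e2" by (rule b2(9))
      finally have aebe: "Comp C (Comp C a e1) e2 = Comp C (Comp C b e1) e2" .
      have dae: "Dom C (Comp C a e1) = Dom C e1" by (rule cat_comp_dom[OF C b1(4) ba(3) e1a])
      have "Comp C a e1 = Comp C b e1"
        by (rule regular_epi_epi[OF C re2 ae be1]) (use dae de1 e2e1 cae cbe aebe in simp_all)
      then show "a = b"
        by (rule regular_epi_epi[OF C re1 ba(3) ba(4), rotated 3]) (use e1a e1b ah bh in simp_all)
    qed
    show "g = g'" using w0(4,5) ab by simp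
  qed
  show ?thesis
    by (rule that[OF rq mh bq(3) h]) (use dq dh ch hq in simp_all)
qed

lemma paste:
  assumes C: "category C" and pbY: "is_pullback C f y x y'" and pbM: "is_pullback C f m0 n m'"
    and e: "e \<in> Arr C" and em: "Cod C e = Dom C m0" and m0e: "Comp C m0 e = y"
    and eb: "eb \<in> Arr C" and deb: "Dom C eb = Dom C x" and ceb: "Cod C eb = Dom C n"
    and neb: "Comp C n eb = x" and meb: "Comp C m' eb = Comp C e y'"
  shows "is_pullback C e m' y' eb"
proof -
  note bY = pb_basic[OF pbY]
  note bM = pb_basic[OF pbM]
  have m0: "m0 \<in> Arr C" by (rule bM(2))
  have de: "Dom C e = Dom C y" using m0e cat_comp_dom[OF C e m0 em] by simp
  have c1: "Cod C e = Cod C m'" using em bM(7) by simp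
  have c2: "Cod C y' = Dom C e" using bY(7) de by simp
  have c3: "Cod C eb = Dom C m'" using ceb bM(8) by simp
  have c4: "Dom C y' = Dom C eb" using deb bY(8) by simp
  have ebn: "Cod C eb = Dom C n" by (rule ceb)
  have ebm: "Cod C eb = Dom C m'" by (rule c3)
  have y'e: "Cod C y' = Dom C e" by (rule c2)
  have U: "\<exists>!u. u \<in> hom C (Dom C p') (Dom C y') \<and> Comp C y' u = p' \<and> Comp C eb u = q'"
    if p': "p' \<in> Arr C" and q': "q' \<in> Arr C" and cp: "Cod C p' = Dom C e" and cq: "Cod C q' = Dom C m'"
      and dpq: "Dom C p' = Dom C q'" and epq: "Comp C e p' = Comp C m' q'" for p' q'
  proof -
    have qn: "Cod C q' = Dom C n" using cq bM(8) by simp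
    have pe: "Cod C p' = Dom C e" by (rule cp)
    have nq: "Comp C n q' \<in> Arr C" by (rule cat_comp_arr[OF C q' bM(3) qn])
    have "Comp C f (Comp C n q') = Comp C (Comp C f n) q'" by (rule cat_assoc[OF C q' bM(3) bM(1) qn bM(6)])
    also have "Comp C f n = Comp C m0 m'" by (rule bM(9))
    also have "Comp C (Comp C m0 m') q' = Comp C m0 (Comp C m' q')" by (rule cat_assoc[OF C q' bM(4) m0 cq bM(7), symmetric])
    also have "Comp C m' q' = Comp C e p'" using epq by simp
    also have "Comp C m0 (Comp C e p') = Comp C (Comp C m0 e) p'" by (rule cat_assoc[OF C p' e m0 pe em])
    also have "Comp C m0 e = y" by (rule m0e)
    finally have fy: "Comp C f (Comp C n q') = Comp C y p'" .
    have dnq: "Dom C (Comp C n q') = Dom C q'" by (rule cat_comp_dom[OF C q' bM(3) qn])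
    obtain u where u: "u \<in> Arr C" "Dom C u = Dom C (Comp C n q')" "Cod C u = Dom C x"
        "Comp C x u = Comp C n q'" "Comp C y' u = p'"
      by (rule pb_exists[OF pbY nq p']) (use cat_comp_cod[OF C q' bM(3) qn] bM(6) cp de dnq dpq fy in simp_all)
    have ux: "Cod C u = Dom C x" by (rule u(3))
    have ueb: "Cod C u = Dom C eb" using u(3) deb by simp
    have uy: "Cod C u = Dom C y'" using u(3) bY(8) by simp
    have ebu: "Comp C eb u \<in> Arr C" by (rule cat_comp_arr[OF C u(1) eb ueb])
    have "Comp C n (Comp C eb u) = Comp C (Comp C n eb) u" by (rule cat_assoc[OF C u(1) eb bM(3) ueb ebn])
    also have "\<dots> = Comp C n q'" using neb u(4) by simp
    finally have e1: "Comp C n (Comp C eb u) = Comp C n q'" .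
    have "Comp C m' (Comp C eb u) = Comp C (Comp C m' eb) u" by (rule cat_assoc[OF C u(1) eb bM(4) ueb ebm])
    also have "\<dots> = Comp C (Comp C e y') u" using meb by simp
    also have "\<dots> = Comp C e (Comp C y' u)" by (rule cat_assoc[OF C u(1) bY(4) e uy y'e, symmetric])
    also have "\<dots> = Comp C m' q'" using u(5) epq by simp
    finally have e2: "Comp C m' (Comp C eb u) = Comp C m' q'" .
    have ebq: "Comp C eb u = q'"
      by (rule pb_unique[OF C pbM ebu q']) (use cat_comp_cod[OF C u(1) eb ueb] cat_comp_dom[OF C u(1) eb ueb] ceb qn u(2) dnq e1 e2 in simp_all)
    show ?thesis
    proof (rule ex1I[where a=u])
      show "u \<in> hom C (Dom C p') (Dom C y') \<and> Comp C y' u = p' \<and> Comp C eb u = q'"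
        unfolding hom_def using u(1,2,5) uy dnq dpq ebq by simp
    next
      fix u2 assume H: "u2 \<in> hom C (Dom C p') (Dom C y') \<and> Comp C y' u2 = p' \<and> Comp C eb u2 = q'"
      have u2: "u2 \<in> Arr C" "Dom C u2 = Dom C p'" "Cod C u2 = Dom C y'" "Comp C y' u2 = p'" "Comp C eb u2 = q'"
        using H unfolding hom_def by simp_all
      have u2eb: "Cod C u2 = Dom C eb" using u2(3) c4 by simp
      have u2x: "Cod C u2 = Dom C x" using u2(3) bY(8) by simp
      have "Comp C x u2 = Comp C (Comp C n eb) u2" using neb by simp
      also have "\<dots> = Comp C n (Comp C eb u2)" by (rule cat_assoc[OF C u2(1) eb bM(3) u2eb ebn, symmetric])
      also have "\<dots> = Comp C x u" using u2(5) u(4) by simp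
      finally have xx: "Comp C x u2 = Comp C x u" .
      show "u2 = u"
        by (rule pb_unique[OF C pbY u2(1) u(1) u2x ux]) (use u2(2) u(2) dnq dpq xx u2(4) u(5) in simp_all)
    qed
  qed
  show ?thesis
    unfolding is_pullback_def
    using e bM(4) bY(4) eb c1 c2 c3 c4 meb[symmetric] U by blast
qed

lemma jeeD:
  assumes "jointly_extremally_epic C a b" "mono C k" "Cod C k = Cod C a"
    "a' \<in> Arr C" "Cod C a' = Dom C k" "Comp C k a' = a"
    "b' \<in> Arr C" "Cod C b' = Dom C k" "Comp C k b' = b"
  shows "iso C k"
proof -
  have H: "\<forall>m. mono C m \<and> Cod C m = Cod C a \<and>
        (\<exists>a' \<in> Arr C. Cod C a' = Dom C m \<and> Comp C m a' = a) \<and>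
        (\<exists>b' \<in> Arr C. Cod C b' = Dom C m \<and> Comp C m b' = b) \<longrightarrow> iso C m"
    using assms(1) unfolding jointly_extremally_epic_def by (elim conjE) assumption
  show ?thesis
    apply (rule H[rule_format])
    using assms(2-9) by blast
qed

lemma jseD:
  assumes "jointly_strongly_epic C a b" "mono C m" "v \<in> hom C (Cod C a) (Cod C m)"
    "a' \<in> hom C (Dom C a) (Dom C m)" "b' \<in> hom C (Dom C b) (Dom C m)"
    "Comp C m a' = Comp C v a" "Comp C m b' = Comp C v b"
  shows "\<exists>!d. d \<in> hom C (Cod C a) (Dom C m) \<and> Comp C m d = v \<and>
               Comp C d a = a' \<and> Comp C d b = b'"
proof -
  have H: "\<forall>m v a' b'. mono C m \<and> v \<in> hom C (Cod C a) (Cod C m) \<and>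
        a' \<in> hom C (Dom C a) (Dom C m) \<and> b' \<in> hom C (Dom C b) (Dom C m) \<and>
        Comp C m a' = Comp C v a \<and> Comp C m b' = Comp C v b \<longrightarrow>
        (\<exists>!d. d \<in> hom C (Cod C a) (Dom C m) \<and> Comp C m d = v \<and>
               Comp C d a = a' \<and> Comp C d b = b')"
    using assms(1) unfolding jointly_strongly_epic_def by (elim conjE) assumption
  show ?thesis
    by (rule H[rule_format]) (intro conjI assms(2-7))
qed

theorem proposition8p2:
  fixes C :: "('o, 'a) cat" and f s :: 'a
  assumes "regular_category C"
    and "split_epi C f s"
  shows "strongly_split C f s \<longleftrightarrow>
    (\<forall>m n m'. mono C m \<and> Cod C m = Cod C f \<and> is_pullback C f m n m' \<longrightarrow>
       jointly_strongly_epic C s n)"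
proof -
  note r = regD[OF assms(1)]
  have C: "category C" by (rule r(1))
  have f: "f \<in> Arr C" and s: "s \<in> Arr C" and ds: "Dom C s = Cod C f" and cs: "Cod C s = Dom C f"
    using assms(2) unfolding split_epi_def hom_def by simp_all
  show ?thesis
  proof
    assume SS: "strongly_split C f s"
    have SS': "\<forall>y x y'. y \<in> Arr C \<and> Cod C y = Cod C f \<and> is_pullback C f y x y' \<longrightarrow>
        jointly_extremally_epic C x s"
      using SS unfolding strongly_split_def .
    show "\<forall>m n m'. mono C m \<and> Cod C m = Cod C f \<and> is_pullback C f m n m' \<longrightarrow>
       jointly_strongly_epic C s n"
    proof (intro allI impI)
      fix m n m' assume H: "mono C m \<and> Cod C m = Cod C f \<and> is_pullback C f m n m'"
      then have mm: "mono C m" and cm: "Cod C m = Cod C f" and pb: "is_pullback C f m n m'" by simp_all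
      note bp = pb_basic[OF pb]
      have jee: "jointly_extremally_epic C n s"
        by (rule SS'[rule_format, of m n m']) (intro conjI mono_arr[OF mm] cm pb)
      have cn: "Cod C n = Dom C f" by (rule bp(6))
      show "jointly_strongly_epic C s n"
        unfolding jointly_strongly_epic_def
      proof (intro conjI allI impI)
        show "s \<in> Arr C" by (rule s)
        show "n \<in> Arr C" by (rule bp(3))
        show "Cod C s = Cod C n" using cs cn by simp
        fix k v a' b'
        assume K: "mono C k \<and> v \<in> hom C (Cod C s) (Cod C k) \<and>
          a' \<in> hom C (Dom C s) (Dom C k) \<and> b' \<in> hom C (Dom C n) (Dom C k) \<and>
          Comp C k a' = Comp C v s \<and> Comp C k b' = Comp C v n"
        have mk: "mono C k" using K by simp
        have k: "k \<in> Arr C" by (rule mono_arr[OF mk])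
        have v: "v \<in> Arr C" "Dom C v = Cod C s" "Cod C v = Cod C k"
          and a': "a' \<in> Arr C" "Dom C a' = Dom C s" "Cod C a' = Dom C k"
          and b': "b' \<in> Arr C" "Dom C b' = Dom C n" "Cod C b' = Dom C k"
          and ka: "Comp C k a' = Comp C v s" and kb: "Comp C k b' = Comp C v n"
          using K unfolding hom_def by simp_all
        obtain p1 p2 where pbk: "is_pullback C v k p1 p2" by (rule pb_ex[OF r(2) v(1) k v(3)])
        have mp1: "mono C p1" by (rule mono_pb[OF C pbk mk])
        note bk = pb_basic[OF pbk]
        obtain u1 where u1: "u1 \<in> Arr C" "Dom C u1 = Dom C s" "Cod C u1 = Dom C p1" "Comp C p1 u1 = s" "Comp C p2 u1 = a'"
          by (rule pb_exists[OF pbk s a'(1)]) (use v(2) a' ka in simp_all)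
        obtain u2 where u2: "u2 \<in> Arr C" "Dom C u2 = Dom C n" "Cod C u2 = Dom C p1" "Comp C p1 u2 = n" "Comp C p2 u2 = b'"
          by (rule pb_exists[OF pbk bp(3) b'(1)]) (use v(2) cs cn b' kb in simp_all)
        have cp1: "Cod C p1 = Dom C v" by (rule bk(6))
        have ip: "iso C p1"
          by (rule jeeD[OF jee mp1 _ u2(1) u2(3) u2(4) u1(1) u1(3) u1(4)]) (use cp1 v(2) cs cn in simp)
        obtain g where g: "g \<in> hom C (Cod C p1) (Dom C p1)" "Comp C g p1 = Id C (Dom C p1)"
            "Comp C p1 g = Id C (Cod C p1)"
          using ip unfolding iso_def by blast
        have ga: "g \<in> Arr C" and dg: "Dom C g = Cod C p1" and cg: "Cod C g = Dom C p1"
          using g(1) unfolding hom_def by simp_all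
        have gp2: "Cod C g = Dom C p2" using cg bk(8) by simp
        define d where "d = Comp C p2 g"
        have da: "d \<in> Arr C" unfolding d_def by (rule cat_comp_arr[OF C ga bk(4) gp2])
        have dd: "Dom C d = Cod C s" unfolding d_def using cat_comp_dom[OF C ga bk(4) gp2] dg cp1 v(2) by simp
        have cd: "Cod C d = Dom C k" unfolding d_def using cat_comp_cod[OF C ga bk(4) gp2] bk(7) by simp
        have gp1: "Cod C g = Dom C p1" by (rule cg)
        have kd: "Comp C k d = v"
        proof -
          have "Comp C k d = Comp C (Comp C k p2) g" unfolding d_def by (rule cat_assoc[OF C ga bk(4) k gp2 bk(7)])
          also have "\<dots> = Comp C (Comp C v p1) g" using bk(9) by simp
          also have "\<dots> = Comp C v (Comp C p1 g)" by (rule cat_assoc[OF C ga bk(3) v(1) gp1 bk(6), symmetric])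
          also have "\<dots> = v" using g(3) cp1 cat_idr[OF C v(1)] by simp
          finally show ?thesis .
        qed
        have dfac: "Comp C d (Comp C p1 u) = Comp C p2 u" if u: "u \<in> Arr C" "Cod C u = Dom C p1" for u
        proof -
          have pu: "Comp C p1 u \<in> Arr C" by (rule cat_comp_arr[OF C u(1) bk(3) u(2)])
          have cpu: "Cod C (Comp C p1 u) = Dom C g" using cat_comp_cod[OF C u(1) bk(3) u(2)] dg by simp
          have "Comp C d (Comp C p1 u) = Comp C p2 (Comp C g (Comp C p1 u))"
            unfolding d_def by (rule cat_assoc[OF C pu ga bk(4) cpu gp2, symmetric])
          also have "Comp C g (Comp C p1 u) = Comp C (Comp C g p1) u"
            by (rule cat_assoc[OF C u(1) bk(3) ga u(2)]) (use dg in simp)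
          also have "\<dots> = u" using g(2) u(2) cat_idl[OF C u(1)] by simp
          finally show ?thesis .
        qed
        have ds': "Comp C d s = a'" using dfac[OF u1(1) u1(3)] u1(4,5) by simp
        have dn': "Comp C d n = b'" using dfac[OF u2(1) u2(3)] u2(4,5) by simp
        show "\<exists>!d. d \<in> hom C (Cod C s) (Dom C k) \<and> Comp C k d = v \<and> Comp C d s = a' \<and> Comp C d n = b'"
        proof (rule ex1I[where a=d])
          show "d \<in> hom C (Cod C s) (Dom C k) \<and> Comp C k d = v \<and> Comp C d s = a' \<and> Comp C d n = b'"
            unfolding hom_def using da dd cd kd ds' dn' by simp
        next
          fix d2 assume H2: "d2 \<in> hom C (Cod C s) (Dom C k) \<and> Comp C k d2 = v \<and> Comp C d2 s = a' \<and> Comp C d2 n = b'"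
          have d2: "d2 \<in> Arr C" "Dom C d2 = Cod C s" "Cod C d2 = Dom C k" "Comp C k d2 = v"
            using H2 unfolding hom_def by simp_all
          show "d2 = d"
            by (rule monoD[OF mk d2(1) da d2(3) cd]) (use d2(2) dd d2(4) kd in simp_all)
        qed
      qed
    qed
  next
    assume RHS: "\<forall>m n m'. mono C m \<and> Cod C m = Cod C f \<and> is_pullback C f m n m' \<longrightarrow>
       jointly_strongly_epic C s n"
    show "strongly_split C f s"
      unfolding strongly_split_def
    proof (intro allI impI)
      fix y x y' assume H: "y \<in> Arr C \<and> Cod C y = Cod C f \<and> is_pullback C f y x y'"
      then have y: "y \<in> Arr C" and cy: "Cod C y = Cod C f" and pbY: "is_pullback C f y x y'" by simp_all
      note bY = pb_basic[OF pbY]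
      show "jointly_extremally_epic C x s"
        unfolding jointly_extremally_epic_def
      proof (intro conjI allI impI)
        show "x \<in> Arr C" by (rule bY(3))
        show "s \<in> Arr C" by (rule s)
        show cxs: "Cod C x = Cod C s" using bY(6) cs by simp
        fix m assume M: "mono C m \<and> Cod C m = Cod C x \<and>
          (\<exists>a' \<in> Arr C. Cod C a' = Dom C m \<and> Comp C m a' = x) \<and>
          (\<exists>b' \<in> Arr C. Cod C b' = Dom C m \<and> Comp C m b' = s)"
        have mk: "mono C m" and cm: "Cod C m = Cod C x" using M by simp_all
        have mA: "m \<in> Arr C" by (rule mono_arr[OF mk])
        obtain x0 where x0: "x0 \<in> Arr C" "Cod C x0 = Dom C m" "Comp C m x0 = x" using M by blast
        obtain s0 where s0: "s0 \<in> Arr C" "Cod C s0 = Dom C m" "Comp C m s0 = s" using M by blast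
        obtain e m0 where em: "regular_epi C e" "mono C m0" "e \<in> Arr C" "m0 \<in> Arr C" "Dom C e = Dom C y"
          "Cod C e = Dom C m0" "Cod C m0 = Cod C y" "Comp C m0 e = y"
          by (rule image_fact[OF assms(1) y])
        have fm0: "Cod C f = Cod C m0" using em(7) cy by simp
        obtain n m' where pbM: "is_pullback C f m0 n m'" by (rule pb_ex[OF r(2) f em(4) fm0])
        note bM = pb_basic[OF pbM]
        have y'e: "Cod C y' = Dom C e" using bY(7) em(5) by simp
        have ey: "Comp C e y' \<in> Arr C" by (rule cat_comp_arr[OF C bY(4) em(3) y'e])
        have "Comp C f x = Comp C y y'" by (rule bY(9))
        also have "\<dots> = Comp C (Comp C m0 e) y'" using em(8) by simp
        also have "\<dots> = Comp C m0 (Comp C e y')" by (rule cat_assoc[OF C bY(4) em(3) em(4) y'e em(6), symmetric])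
        finally have fx: "Comp C f x = Comp C m0 (Comp C e y')" .
        obtain eb where eb: "eb \<in> Arr C" "Dom C eb = Dom C x" "Cod C eb = Dom C n" "Comp C n eb = x"
            "Comp C m' eb = Comp C e y'"
          by (rule pb_exists[OF pbM bY(3) ey])
             (use bY(6) cat_comp_cod[OF C bY(4) em(3) y'e] cat_comp_dom[OF C bY(4) em(3) y'e] em(6) bY(8) fx in simp_all)
        have pbE: "is_pullback C e m' y' eb"
          by (rule paste[OF C pbY pbM em(3) em(6) em(8) eb])
        have reb: "regular_epi C eb" by (rule r(4)[OF em(1) pbE])
        obtain u v where cq: "is_coequalizer C u v eb" using reb unfolding regular_epi_def by blast
        have dx0: "Dom C x0 = Dom C eb" using cat_comp_dom[OF C x0(1) mA x0(2)] x0(3) eb(2) by simp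
        obtain d where d: "d \<in> Arr C" "Dom C d = Cod C eb" "Cod C d = Dom C m" "Comp C m d = n"
          by (rule strong_epi[OF C cq mk bM(3) _ x0(1) x0(2) dx0]) (use eb(3,4) x0(3) in simp_all)
        have jse: "jointly_strongly_epic C s n"
          by (rule RHS[rule_format, of m0 n m']) (intro conjI em(2) fm0[symmetric] pbM)
        have cn: "Cod C n = Cod C s" using bM(6) cs by simp
        have so: "Cod C s \<in> Obj C" by (rule cat_cod_obj[OF C s])
        have ex: "\<exists>!d0. d0 \<in> hom C (Cod C s) (Dom C m) \<and> Comp C m d0 = Id C (Cod C s) \<and>
               Comp C d0 s = s0 \<and> Comp C d0 n = d"
        proof (rule jseD[OF jse mk])
          show "Id C (Cod C s) \<in> hom C (Cod C s) (Cod C m)"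
            unfolding hom_def using C so cm cxs by simp
          show "s0 \<in> hom C (Dom C s) (Dom C m)"
            unfolding hom_def using s0 cat_comp_dom[OF C s0(1) mA s0(2)] by simp
          show "d \<in> hom C (Dom C n) (Dom C m)"
            unfolding hom_def using d eb(3) by simp
          show "Comp C m s0 = Comp C (Id C (Cod C s)) s" using s0(3) cat_idl[OF C s] by simp
          show "Comp C m d = Comp C (Id C (Cod C s)) n" using d(4) cn cat_idl[OF C bM(3)] by simp
        qed
        obtain d0 where d0: "d0 \<in> hom C (Cod C s) (Dom C m) \<and> Comp C m d0 = Id C (Cod C s)"
          using ex1_implies_ex[OF ex] by blast
        have d0a: "d0 \<in> Arr C" and dd0: "Dom C d0 = Cod C m" and cd0: "Cod C d0 = Dom C m"
          and md0: "Comp C m d0 = Id C (Cod C m)"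
          using d0 cm cxs unfolding hom_def by simp_all
        have mo: "Dom C m \<in> Obj C" by (rule cat_dom_obj[OF C mA])
        have md: "Cod C m = Dom C d0" using dd0 by simp
        have d0m: "Comp C d0 m \<in> Arr C" by (rule cat_comp_arr[OF C mA d0a md])
        have "Comp C m (Comp C d0 m) = Comp C (Comp C m d0) m" by (rule cat_assoc[OF C mA d0a mA md cd0])
        also have "\<dots> = m" using md0 cat_idl[OF C mA] by simp
        also have "\<dots> = Comp C m (Id C (Dom C m))" using cat_idr[OF C mA] by simp
        finally have mm: "Comp C m (Comp C d0 m) = Comp C m (Id C (Dom C m))" .
        have d0m_id: "Comp C d0 m = Id C (Dom C m)"
          by (rule monoD[OF mk d0m]) (use C mo cd0 mm cat_comp_cod[OF C mA d0a md] cat_comp_dom[OF C mA d0a md] in simp_all)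
        show "iso C m"
          unfolding iso_def hom_def using mA d0a dd0 cd0 d0m_id md0 by blast
      qed
    qed
  qed
qed

end
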